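(* Let $P$ be a finite poset, $r,s$ positive integers, and $\theta$ a cyclic permutation of $\mathbf{F}_0\cup\mathbf{F}_1$. For every $p\in P$, the statistic $T_p^+-\frac{r}{s}T_p^-$, viewed as a statistic on $\mathcal{J}_{r,s}(P)$, is $0$-mesic under the $q$-rowmotion operator $\rho\colon\mathcal{J}_{r,s}(P)\to\mathcal{J}_{r,s}(P)$.
   Context: $\mathbf{F}_0$ and $\mathbf{F}_1$ are disjoint sets with $\#\mathbf{F}_0=s$, $\#\mathbf{F}_1=r$, and $\theta$ is a permutation of $\mathbf{F}_0\cup\mathbf{F}_1$ consisting of a single cycle of length $r+s$. $\mathcal{J}_{r,s}(P)$ is the set of labelings $L\colon P\to\mathbf{F}_0\cup\mathbf{F}_1$ such that $L^{-1}(\mathbf{F}_0)$ is an order ideal of $P$. An element $x$ is active in $L$ if $x$ is maximal in $L^{-1}(\mathbf{F}_0)$ or minimal in $L^{-1}(\mathbf{F}_1)$. The toggle $\tau_p$ on $\mathcal{J}_{r,s}(P)$ replaces the label $L(p)$ by $\theta(L(p))$ if $p$ is active in $L$, and does nothing otherwise; all other labels are unchanged. $q$-rowmotion is $\rho=\tau_{p_1}\circ\cdots\circ\tau_{p_n}$ for any linear extension $p_1,\dots,p_n$ of $P$. For an order ideal $I$ of $P$: $T_p^+(I)=1$ if $p$ is minimal in $P\setminus I$, else $0$; $T_p^-(I)=1$ if $p$ is maximal in $I$, else $0$; a statistic $g$ on order ideals is viewed on $\mathcal{J}_{r,s}(P)$ via $g(L)\coloneqq g(L^{-1}(\mathbf{F}_0))$.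 A statistic is $c$-mesic under an invertible map of a finite set if its average over every orbit equals $c$. *)

theory Defs
  imports Complex_Main "HOL-Library.FuncSet" "HOL-Combinatorics.Permutations"
begin

definition poset_on :: "'a set \<Rightarrow> ('a \<Rightarrow> 'a \<Rightarrow> bool) \<Rightarrow> bool" where
  "poset_on P le \<longleftrightarrow>
     (\<forall>x\<in>P. le x x) \<and>
     (\<forall>x\<in>P. \<forall>y\<in>P. le x y \<and> le y x \<longrightarrow> x = y) \<and>
     (\<forall>x\<in>P. \<forall>y\<in>P. \<forall>z\<in>P. le x y \<and> le y z \<longrightarrow> le x z)"

definition order_ideal :: "'a set \<Rightarrow> ('a \<Rightarrow> 'a \<Rightarrow> bool) \<Rightarrow> 'a set \<Rightarrow> bool" where
  "order_ideal P le I \<longleftrightarrow> I \<subseteq> P \<and> (\<forall>x\<in>I. \<forall>y\<in>P. le y x \<longrightarrow> y \<in> I)"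

definition is_maximal_in :: "('a \<Rightarrow> 'a \<Rightarrow> bool) \<Rightarrow> 'a set \<Rightarrow> 'a \<Rightarrow> bool" where
  "is_maximal_in le S x \<longleftrightarrow> x \<in> S \<and> (\<forall>y\<in>S. le x y \<longrightarrow> y = x)"

definition is_minimal_in :: "('a \<Rightarrow> 'a \<Rightarrow> bool) \<Rightarrow> 'a set \<Rightarrow> 'a \<Rightarrow> bool" where
  "is_minimal_in le S x \<longleftrightarrow> x \<in> S \<and> (\<forall>y\<in>S. le y x \<longrightarrow> y = x)"

definition single_cycle_perm :: "('b \<Rightarrow> 'b) \<Rightarrow> 'b set \<Rightarrow> bool" where
  "single_cycle_perm \<theta> F \<longleftrightarrow> \<theta> permutes F \<and> (\<exists>x\<in>F. F = {(\<theta> ^^ n) x | n. True})"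

definition lower_part :: "'a set \<Rightarrow> 'b set \<Rightarrow> ('a \<Rightarrow> 'b) \<Rightarrow> 'a set" where
  "lower_part P F0 L = {x\<in>P. L x \<in> F0}"

definition Jrs :: "'a set \<Rightarrow> ('a \<Rightarrow> 'a \<Rightarrow> bool) \<Rightarrow> 'b set \<Rightarrow> 'b set \<Rightarrow> ('a \<Rightarrow> 'b) set" where
  "Jrs P le F0 F1 = {L \<in> P \<rightarrow>\<^sub>E (F0 \<union> F1). order_ideal P le (lower_part P F0 L)}"

definition active :: "'a set \<Rightarrow> ('a \<Rightarrow> 'a \<Rightarrow> bool) \<Rightarrow> 'b set \<Rightarrow> 'b set \<Rightarrow> ('a \<Rightarrow> 'b) \<Rightarrow> 'a \<Rightarrow> bool" where
  "active P le F0 F1 L x \<longleftrightarrow>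
     is_maximal_in le {y\<in>P. L y \<in> F0} x \<or> is_minimal_in le {y\<in>P. L y \<in> F1} x"

definition toggle :: "'a set \<Rightarrow> ('a \<Rightarrow> 'a \<Rightarrow> bool) \<Rightarrow> 'b set \<Rightarrow> 'b set \<Rightarrow> ('b \<Rightarrow> 'b)
    \<Rightarrow> 'a \<Rightarrow> ('a \<Rightarrow> 'b) \<Rightarrow> ('a \<Rightarrow> 'b)" where
  "toggle P le F0 F1 \<theta> p L = (if active P le F0 F1 L p then L(p := \<theta> (L p)) else L)"

definition linear_extension :: "'a set \<Rightarrow> ('a \<Rightarrow> 'a \<Rightarrow> bool) \<Rightarrow> 'a list \<Rightarrow> bool" where
  "linear_extension P le ps \<longleftrightarrow> distinct ps \<and> set ps = P \<and>
     (\<forall>i<length ps. \<forall>j<length ps. le (ps ! i) (ps ! j) \<longrightarrow> i \<le> j)"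

text \<open>q-rowmotion tau_{p1} o ... o tau_{pn} for ps = [p1,...,pn] (tau_{pn} applied first).\<close>
definition q_rowmotion :: "'a set \<Rightarrow> ('a \<Rightarrow> 'a \<Rightarrow> bool) \<Rightarrow> 'b set \<Rightarrow> 'b set \<Rightarrow> ('b \<Rightarrow> 'b)
    \<Rightarrow> 'a list \<Rightarrow> ('a \<Rightarrow> 'b) \<Rightarrow> ('a \<Rightarrow> 'b)" where
  "q_rowmotion P le F0 F1 \<theta> ps L = foldr (toggle P le F0 F1 \<theta>) ps L"

definition Tplus :: "'a set \<Rightarrow> ('a \<Rightarrow> 'a \<Rightarrow> bool) \<Rightarrow> 'a \<Rightarrow> 'a set \<Rightarrow> real" where
  "Tplus P le p I = (if is_minimal_in le (P - I) p then 1 else 0)"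

definition Tminus :: "'a set \<Rightarrow> ('a \<Rightarrow> 'a \<Rightarrow> bool) \<Rightarrow> 'a \<Rightarrow> 'a set \<Rightarrow> real" where
  "Tminus P le p I = (if is_maximal_in le I p then 1 else 0)"

definition orbit_of :: "('c \<Rightarrow> 'c) \<Rightarrow> 'c \<Rightarrow> 'c set" where
  "orbit_of f x = {(f ^^ n) x | n. True}"

definition mesic :: "'c set \<Rightarrow> ('c \<Rightarrow> 'c) \<Rightarrow> ('c \<Rightarrow> real) \<Rightarrow> real \<Rightarrow> bool" where
  "mesic A f g c \<longleftrightarrow>
     (\<forall>x\<in>A. (\<Sum>y\<in>orbit_of f x. g y) / real (card (orbit_of f x)) = c)"

end

theory Submission
  imports Defs "HOL-Combinatorics.Orbits"
begin

lemma cyc_potential: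
  fixes u :: "'b \<Rightarrow> real"
  assumes perm: "\<theta> permutes F" and fin: "finite F" and x0: "x0 \<in> F"
    and F: "F = {(\<theta> ^^ n) x0 | n. True}" and s0: "(\<Sum>a\<in>F. u a) = 0"
  shows "\<exists>\<phi>. \<forall>a\<in>F. \<phi> (\<theta> a) - \<phi> a = u a"
proof -
  have pm: "permutation \<theta>" using perm fin permutation_permutes by blast
  have orb: "orbit \<theta> x0 = F" using orbit_altdef_permutation[OF pm] F by simp
  have self: "x0 \<in> orbit \<theta> x0" using permutation_self_in_orbit[OF pm] .
  define d where "d = funpow_dist1 \<theta> x0 x0"
  define e where "e = (\<lambda>n. (\<theta> ^^ n) x0)"
  have Fd: "F = e ` {0..<d}" using orbit_conv_funpow_dist1[OF self] orb unfolding d_def e_def by simp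
  have inj: "inj_on e {0..<d}" using inj_on_funpow_dist1[OF self] unfolding d_def e_def .
  have ed: "e d = x0" using funpow_dist1_prop[OF self] unfolding d_def e_def .
  have d0: "d > 0" unfolding d_def by simp
  define idx where "idx = the_inv_into {0..<d} e"
  have idx2: "idx (e k) = k" if "k < d" for k
    using that inj unfolding idx_def by (simp add: the_inv_into_f_f)
  have idx1: "idx a < d" "e (idx a) = a" if aF: "a \<in> F" for a
  proof -
    obtain k where "k < d" "a = e k" using aF Fd by auto
    then show "idx a < d" "e (idx a) = a" using idx2 by auto
  qed
  define \<phi> where "\<phi> a = (\<Sum>i<idx a. u (e i))" for a
  have tot: "(\<Sum>i<d. u (e i)) = 0"
  proof -
    have "(\<Sum>i<d. u (e i)) = (\<Sum>a\<in>e ` {0..<d}. u a)"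
      using sum.reindex[OF inj, of u] by (simp add: lessThan_atLeast0)
    then show ?thesis using Fd s0 by simp
  qed
  have "\<phi> (\<theta> a) - \<phi> a = u a" if a: "a \<in> F" for a
  proof -
    let ?k = "idx a"
    have k: "?k < d" "e ?k = a" using idx1 a by auto
    have th: "\<theta> a = e (Suc ?k)" using k(2) unfolding e_def by simp
    show ?thesis
    proof (cases "Suc ?k < d")
      case True
      then show ?thesis using th idx2 k unfolding \<phi>_def by simp
    next
      case False
      then have "Suc ?k = d" using k by simp
      then have "\<theta> a = x0" using th ed by simp
      moreover have "idx x0 = 0" using idx2[of 0] d0 unfolding e_def by simp
      moreover have "(\<Sum>i<?k. u (e i)) + u a = 0"
        using tot \<open>Suc ?k = d\<close> k(2) by (metis sum.lessThan_Suc)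
      ultimately show ?thesis unfolding \<phi>_def by simp
    qed
  qed
  then show ?thesis by blast
qed


lemma toggle_other: "q \<noteq> p \<Longrightarrow> toggle P le F0 F1 \<theta> p L q = L q"
  by (simp add: toggle_def)

lemma foldr_other: "q \<notin> set xs \<Longrightarrow> foldr (toggle P le F0 F1 \<theta>) xs L q = L q"
  by (induction xs) (auto simp: toggle_other)

lemma Jrs_range: "L \<in> Jrs P le F0 F1 \<Longrightarrow> x \<in> P \<Longrightarrow> L x \<in> F0 \<union> F1"
  by (auto simp: Jrs_def)

lemma toggle_Jrs:
  assumes L: "L \<in> Jrs P le F0 F1" and p: "p \<in> P" and th: "\<theta> permutes (F0 \<union> F1)"
    and dj: "F0 \<inter> F1 = {}"
  shows "toggle P le F0 F1 \<theta> p L \<in> Jrs P le F0 F1"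
proof (cases "active P le F0 F1 L p")
  case False then show ?thesis using L by (simp add: toggle_def)
next
  case True
  let ?L' = "L(p := \<theta> (L p))"
  have Lp: "L p \<in> F0 \<union> F1" using Jrs_range[OF L p] .
  have thp: "\<theta> (L p) \<in> F0 \<union> F1" using Lp permutes_in_image[OF th] by blast
  have ext: "?L' \<in> P \<rightarrow>\<^sub>E (F0 \<union> F1)" using L p thp by (auto simp: Jrs_def PiE_def Pi_def extensional_def)
  have id: "order_ideal P le (lower_part P F0 L)" using L by (simp add: Jrs_def)
  have "order_ideal P le (lower_part P F0 ?L')"
    unfolding order_ideal_def lower_part_def
  proof (intro conjI ballI impI)
    show "{x \<in> P. ?L' x \<in> F0} \<subseteq> P" by auto
  next
    fix x y assume x: "x \<in> {x \<in> P. ?L' x \<in> F0}" and y: "y \<in> P" and yx: "le y x"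
    show "y \<in> {x \<in> P. ?L' x \<in> F0}"
    proof (cases "x = p")
      case True
      then have "\<theta> (L p) \<in> F0" using x by simp
      show ?thesis
      proof (cases "y = p")
        case True then show ?thesis using \<open>\<theta> (L p) \<in> F0\<close> y by simp
      next
        case False
        show ?thesis
        proof (cases "L p \<in> F0")
          case True
          then have "L x \<in> F0" using \<open>x = p\<close> by simp
          then have "L y \<in> F0" using id y yx \<open>x = p\<close> p unfolding order_ideal_def lower_part_def by blast
          then show ?thesis using False y by simp
        next
          case LF: False
          then have "L p \<in> F1" using Lp by blast
          then have "is_minimal_in le {y\<in>P. L y \<in> F1} p" using True LF
            using \<open>active P le F0 F1 L p\<close> unfolding active_def is_maximal_in_def by auto
          then have "L y \<notin> F1" using False y yx \<open>x = p\<close> unfolding is_minimal_in_def by auto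
          then show ?thesis using Jrs_range[OF L y] False y by auto
        qed
      qed
    next
      case False
      then have "L x \<in> F0" "x \<in> P" using x by auto
      then have Ly: "L y \<in> F0" using id y yx unfolding order_ideal_def lower_part_def by blast
      show ?thesis
      proof (cases "y = p")
        case True
        have "is_maximal_in le {y\<in>P. L y \<in> F0} p"
          using \<open>active P le F0 F1 L p\<close> Ly True dj unfolding active_def is_minimal_in_def by auto
        then have False using \<open>L x \<in> F0\<close> \<open>x \<in> P\<close> yx True \<open>x \<noteq> p\<close> unfolding is_maximal_in_def by auto
        then show ?thesis ..
      next
        case False then show ?thesis using Ly y by simp
      qed
    qed
  qed
  then show ?thesis using ext True by (simp add: toggle_def Jrs_def)
qed

lemma foldr_Jrs:
  assumes "L \<in> Jrs P le F0 F1" "set xs \<subseteq> P" "\<theta> permutes (F0 \<union> F1)" "F0 \<inter> F1 = {}"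
  shows "foldr (toggle P le F0 F1 \<theta>) xs L \<in> Jrs P le F0 F1"
  using assms by (induction xs) (auto intro: toggle_Jrs)

lemma toggle_active:
  assumes L: "L \<in> Jrs P le F0 F1" and p: "p \<in> P" and th: "\<theta> permutes (F0 \<union> F1)"
    and dj: "F0 \<inter> F1 = {}" and act: "active P le F0 F1 L p"
  shows "active P le F0 F1 (L(p := \<theta> (L p))) p"
proof -
  have Lp: "L p \<in> F0 \<union> F1" using Jrs_range[OF L p] .
  have thp: "\<theta> (L p) \<in> F0 \<union> F1" using Lp permutes_in_image[OF th] by blast
  have id: "order_ideal P le (lower_part P F0 L)" using L by (simp add: Jrs_def)
  show ?thesis
  proof (cases "L p \<in> F0")
    case True
    then have mx: "is_maximal_in le {y\<in>P. L y \<in> F0} p" using act dj unfolding active_def is_minimal_in_def by auto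
    show ?thesis
    proof (cases "\<theta> (L p) \<in> F0")
      case True then show ?thesis using mx unfolding active_def is_maximal_in_def by auto
    next
      case False
      then have "\<theta> (L p) \<in> F1" using thp by blast
      moreover have "\<forall>y\<in>P. y \<noteq> p \<longrightarrow> le y p \<longrightarrow> L y \<in> F0"
        using id True p unfolding order_ideal_def lower_part_def by blast
      ultimately have "is_minimal_in le {y\<in>P. (L(p := \<theta> (L p))) y \<in> F1} p"
        using p dj unfolding is_minimal_in_def by auto
      then show ?thesis unfolding active_def by blast
    qed
  next
    case False
    then have LF1: "L p \<in> F1" using Lp by blast
    then have mn: "is_minimal_in le {y\<in>P. L y \<in> F1} p" using act False unfolding active_def is_maximal_in_def by auto
    show ?thesis
    proof (cases "\<theta> (L p) \<in> F1")
      case True then show ?thesis using mn unfolding active_def is_minimal_in_def by auto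
    next
      case False
      then have "\<theta> (L p) \<in> F0" using thp by blast
      moreover have "\<forall>y\<in>P. y \<noteq> p \<longrightarrow> le p y \<longrightarrow> L y \<notin> F0"
        using id \<open>L p \<notin> F0\<close> p unfolding order_ideal_def lower_part_def by blast
      ultimately have "is_maximal_in le {y\<in>P. (L(p := \<theta> (L p))) y \<in> F0} p"
        using p unfolding is_maximal_in_def by auto
      then show ?thesis unfolding active_def by blast
    qed
  qed
qed

lemma toggle_inj:
  assumes L: "L \<in> Jrs P le F0 F1" and M: "M \<in> Jrs P le F0 F1" and p: "p \<in> P"
    and th: "\<theta> permutes (F0 \<union> F1)" and dj: "F0 \<inter> F1 = {}"
    and eq: "toggle P le F0 F1 \<theta> p L = toggle P le F0 F1 \<theta> p M"
  shows "L = M"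
proof -
  have inj: "inj \<theta>" using permutes_inj[OF th] .
  consider "active P le F0 F1 L p" "active P le F0 F1 M p"
    | "active P le F0 F1 L p" "\<not> active P le F0 F1 M p"
    | "\<not> active P le F0 F1 L p" "active P le F0 F1 M p"
    | "\<not> active P le F0 F1 L p" "\<not> active P le F0 F1 M p" by blast
  then show ?thesis
  proof cases
    case 1
    then have e: "L(p := \<theta> (L p)) = M(p := \<theta> (M p))" using eq by (simp add: toggle_def)
    then have "\<theta> (L p) = \<theta> (M p)" by (metis fun_upd_same)
    then have "L p = M p" using inj by (simp add: inj_eq)
    then show ?thesis using e by (metis fun_upd_triv fun_upd_upd)
  next
    case 2
    then have "L(p := \<theta> (L p)) = M" using eq by (simp add: toggle_def)
    then have False using toggle_active[OF L p th dj] 2 by blast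
    then show ?thesis ..
  next
    case 3
    then have "M(p := \<theta> (M p)) = L" using eq by (simp add: toggle_def)
    then have False using toggle_active[OF M p th dj] 3 by blast
    then show ?thesis ..
  next
    case 4 then show ?thesis using eq by (simp add: toggle_def)
  qed
qed

lemma foldr_inj:
  assumes "L \<in> Jrs P le F0 F1" "M \<in> Jrs P le F0 F1" "set xs \<subseteq> P"
    "\<theta> permutes (F0 \<union> F1)" "F0 \<inter> F1 = {}"
    "foldr (toggle P le F0 F1 \<theta>) xs L = foldr (toggle P le F0 F1 \<theta>) xs M"
  shows "L = M"
  using assms
proof (induction xs)
  case Nil then show ?case by simp
next
  case (Cons x xs)
  have "foldr (toggle P le F0 F1 \<theta>) xs L = foldr (toggle P le F0 F1 \<theta>) xs M"
    using Cons.prems toggle_inj[OF foldr_Jrs foldr_Jrs] by auto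
  then show ?case using Cons by auto
qed


lemma linext_split:
  assumes le: "linear_extension P le ps" and p: "p \<in> P"
  obtains xs ys where "ps = xs @ p # ys" "p \<notin> set xs" "p \<notin> set ys"
    "\<And>q. q \<in> set ys \<Longrightarrow> \<not> le q p" "\<And>q. q \<in> set xs \<Longrightarrow> \<not> le p q"
proof -
  have d: "distinct ps" and sp: "set ps = P"
    and ord: "\<forall>i<length ps. \<forall>j<length ps. le (ps ! i) (ps ! j) \<longrightarrow> i \<le> j"
    using le by (auto simp: linear_extension_def)
  obtain xs ys where ps: "ps = xs @ p # ys" using p sp split_list by metis
  have nx: "p \<notin> set xs" "p \<notin> set ys" using d ps by auto
  have pi: "ps ! length xs = p" using ps by simp
  have A: "\<not> le q p" if qy: "q \<in> set ys" for q
  proof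
    assume lqp: "le q p"
    obtain k where k: "k < length ys" "ys ! k = q" using qy in_set_conv_nth by metis
    have "ps ! (length xs + 1 + k) = q" using ps k by (simp add: nth_append)
    moreover have "length xs + 1 + k < length ps" "length xs < length ps" using ps k by auto
    ultimately have "length xs + 1 + k \<le> length xs" using ord pi lqp by blast
    then show False by simp
  qed
  have B: "\<not> le p q" if qx: "q \<in> set xs" for q
  proof
    assume lpq: "le p q"
    obtain k where k: "k < length xs" "xs ! k = q" using qx in_set_conv_nth by metis
    have "ps ! k = q" using ps k by (simp add: nth_append)
    moreover have "k < length ps" "length xs < length ps" using ps k by auto
    ultimately have "length xs \<le> k" using ord pi lpq by blast
    then show False using k by simp
  qed
  show ?thesis by (rule that[OF ps nx A B])
qed

lemma step_identity:
  fixes c :: real and \<phi> :: "'b \<Rightarrow> real"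
  assumes L: "L \<in> Jrs P le F0 F1" and th: "\<theta> permutes (F0 \<union> F1)" and dj: "F0 \<inter> F1 = {}"
    and lx: "linear_extension P le ps" and p: "p \<in> P"
    and phi: "\<forall>a\<in>F0 \<union> F1. \<phi> (\<theta> a) - \<phi> a = (if a \<in> F1 then 1 else 0) - c * (if \<theta> a \<in> F0 then 1 else 0)"
  shows "Tplus P le p (lower_part P F0 L) - c * Tminus P le p (lower_part P F0 (q_rowmotion P le F0 F1 \<theta> ps L))
     = \<phi> (q_rowmotion P le F0 F1 \<theta> ps L p) - \<phi> (L p)"
proof -
  obtain xs ys where ps: "ps = xs @ p # ys" and nx: "p \<notin> set xs" "p \<notin> set ys"
    and ny: "\<And>q. q \<in> set ys \<Longrightarrow> \<not> le q p" and nxs: "\<And>q. q \<in> set xs \<Longrightarrow> \<not> le p q"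
    using linext_split[OF lx p] by metis
  have sP: "set ps = P" using lx by (simp add: linear_extension_def)
  have xsP: "set xs \<subseteq> P" "set ys \<subseteq> P" using sP ps by auto
  define M where "M = foldr (toggle P le F0 F1 \<theta>) ys L"
  define N where "N = toggle P le F0 F1 \<theta> p M"
  define R where "R = foldr (toggle P le F0 F1 \<theta>) xs N"
  have R: "q_rowmotion P le F0 F1 \<theta> ps L = R"
    unfolding R_def N_def M_def q_rowmotion_def ps by simp
  have MJ: "M \<in> Jrs P le F0 F1" unfolding M_def using foldr_Jrs[OF L xsP(2) th dj] .
  have NJ: "N \<in> Jrs P le F0 F1" unfolding N_def using toggle_Jrs[OF MJ p th dj] .
  have RJ: "R \<in> Jrs P le F0 F1" unfolding R_def using foldr_Jrs[OF NJ xsP(1) th dj] .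
  have Mp: "M p = L p" unfolding M_def using foldr_other[OF nx(2)] .
  have Mbelow: "M q = L q" if "le q p" for q
    unfolding M_def using foldr_other ny that by metis
  have Rabove: "R q = M q" if "le p q" "q \<noteq> p" for q
  proof -
    have "R q = N q" unfolding R_def using foldr_other nxs that by metis
    then show ?thesis unfolding N_def using toggle_other that by metis
  qed
  have Rp: "R p = (if active P le F0 F1 M p then \<theta> (L p) else L p)"
    unfolding R_def foldr_other[OF nx(1)] N_def toggle_def using Mp by simp
  have Lp: "L p \<in> F0 \<union> F1" using Jrs_range[OF L p] .
  have thp: "\<theta> (L p) \<in> F0 \<union> F1" using Lp permutes_in_image[OF th] by blast
  have idL: "order_ideal P le (lower_part P F0 L)" using L by (simp add: Jrs_def)
  have idM: "order_ideal P le (lower_part P F0 M)" using MJ by (simp add: Jrs_def)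
  have compl: "P - lower_part P F0 L = {y\<in>P. L y \<in> F1}"
    using Jrs_range[OF L] dj by (auto simp: lower_part_def)
  have phL: "\<phi> (\<theta> (L p)) - \<phi> (L p) = (if L p \<in> F1 then 1 else 0) - c * (if \<theta> (L p) \<in> F0 then 1 else 0)"
    using phi Lp by blast
  show ?thesis
  proof (cases "L p \<in> F0")
    case False
    then have F1: "L p \<in> F1" using Lp by blast
    have eqT: "active P le F0 F1 M p \<longleftrightarrow> is_minimal_in le {y\<in>P. L y \<in> F1} p"
      using False Mp Mbelow unfolding active_def is_maximal_in_def is_minimal_in_def by auto
    have abv: "R q \<notin> F0" if "q \<in> P" "le p q" "q \<noteq> p" for q
    proof
      assume "R q \<in> F0"
      then have "M q \<in> F0" using Rabove that by simp
      then have "M p \<in> F0" using idM that p unfolding order_ideal_def lower_part_def by blast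
      then show False using Mp False by simp
    qed
    have Tm: "Tminus P le p (lower_part P F0 R) = (if R p \<in> F0 then 1 else 0)"
      unfolding Tminus_def lower_part_def is_maximal_in_def using abv p by auto
    have Tp: "Tplus P le p (lower_part P F0 L) = (if is_minimal_in le {y\<in>P. L y \<in> F1} p then 1 else 0)"
      unfolding Tplus_def compl ..
    show ?thesis
    proof (cases "is_minimal_in le {y\<in>P. L y \<in> F1} p")
      case True
      then have "R p = \<theta> (L p)" using Rp eqT by simp
      then show ?thesis unfolding R Tm Tp using True phL F1 by simp
    next
      case nT: False
      then have "R p = L p" using Rp eqT by simp
      then show ?thesis unfolding R Tm Tp using nT False by simp
    qed
  next
    case True
    have X: "active P le F0 F1 M p \<longleftrightarrow> (\<forall>q\<in>P. R q \<in> F0 \<and> le p q \<longrightarrow> q = p)"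
      using True Mp Rabove dj p unfolding active_def is_maximal_in_def is_minimal_in_def by auto
    have Tm: "Tminus P le p (lower_part P F0 R) = (if R p \<in> F0 \<and> (\<forall>q\<in>P. R q \<in> F0 \<and> le p q \<longrightarrow> q = p) then 1 else 0)"
      unfolding Tminus_def lower_part_def is_maximal_in_def using p by auto
    have Tp: "Tplus P le p (lower_part P F0 L) = 0"
      unfolding Tplus_def is_minimal_in_def lower_part_def using True by auto
    have nF1: "L p \<notin> F1" using True dj by blast
    show ?thesis
    proof (cases "active P le F0 F1 M p")
      case True
      then have "R p = \<theta> (L p)" "\<forall>q\<in>P. R q \<in> F0 \<and> le p q \<longrightarrow> q = p" using Rp X by auto
      then show ?thesis unfolding R Tm Tp using phL nF1 by simp
    next
      case nA: False
      then have "R p = L p" "\<not> (\<forall>q\<in>P. R q \<in> F0 \<and> le p q \<longrightarrow> q = p)" using Rp X by auto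
      then show ?thesis unfolding R Tm Tp by auto
    qed
  qed
qed


lemma sum_perm_inv:
  assumes "inj_on f Orb" "f ` Orb = Orb"
  shows "(\<Sum>y\<in>Orb. h (f y)) = (\<Sum>y\<in>Orb. h y)"
  using sum.reindex[OF assms(1), of h] assms(2) by simp

theorem lemma5p4:
  fixes P :: "'a set" and le :: "'a \<Rightarrow> 'a \<Rightarrow> bool"
    and F0 F1 :: "'b set" and \<theta> :: "'b \<Rightarrow> 'b" and r s :: nat
    and ps :: "'a list" and p :: 'a
  assumes "finite P" and "poset_on P le"
    and "finite F0" and "finite F1" and "F0 \<inter> F1 = {}"
    and "card F0 = s" and "card F1 = r" and "r > 0" and "s > 0"
    and "single_cycle_perm \<theta> (F0 \<union> F1)"
    and "linear_extension P le ps"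
    and "p \<in> P"
  shows "mesic (Jrs P le F0 F1) (q_rowmotion P le F0 F1 \<theta> ps)
           (\<lambda>L. Tplus P le p (lower_part P F0 L)
                 - (real r / real s) * Tminus P le p (lower_part P F0 L)) 0"
proof -
  note finP = assms(1) and fin0 = assms(3) and fin1 = assms(4) and dj = assms(5)
    and c0 = assms(6) and c1 = assms(7) and s0 = assms(9) and lx = assms(11) and p = assms(12)
  define F where "F = F0 \<union> F1"
  have th: "\<theta> permutes F" and cyc: "\<exists>x\<in>F. F = {(\<theta> ^^ n) x | n. True}"
    using assms(10) unfolding single_cycle_perm_def F_def by auto
  obtain x0 where x0: "x0 \<in> F" "F = {(\<theta> ^^ n) x | n. True}" if "x = x0" for x
    using cyc by blast
  have finF: "finite F" using fin0 fin1 F_def by simp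
  define c :: real where "c = real r / real s"
  define u where "u a = (if a \<in> F1 then 1 else 0) - c * (if \<theta> a \<in> F0 then 1 else 0)" for a
  have sF1: "(\<Sum>a\<in>F. (if a \<in> F1 then 1 else 0 :: real)) = real r"
  proof -
    have "(\<Sum>a\<in>F. (if a \<in> F1 then 1 else 0 :: real)) = (\<Sum>a\<in>{a\<in>F. a \<in> F1}. 1)"
      using sum.inter_filter[OF finF, of "\<lambda>_. 1::real" "\<lambda>a. a \<in> F1"] by simp
    also have "{a\<in>F. a \<in> F1} = F1" unfolding F_def by auto
    finally show ?thesis using c1 by simp
  qed
  have sF0: "(\<Sum>a\<in>F. (if \<theta> a \<in> F0 then 1 else 0 :: real)) = real s"
  proof -
    have "(\<Sum>a\<in>F. (if \<theta> a \<in> F0 then 1 else 0 :: real)) = (\<Sum>b\<in>\<theta> ` F. (if b \<in> F0 then 1 else 0 :: real))"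
      using sum.reindex[of \<theta> F "\<lambda>b. if b \<in> F0 then 1 else 0 :: real"] permutes_inj[OF th]
      by (simp add: inj_on_def)
    also have "\<theta> ` F = F" using permutes_image[OF th] .
    also have "(\<Sum>b\<in>F. (if b \<in> F0 then 1 else 0 :: real)) = (\<Sum>a\<in>{a\<in>F. a \<in> F0}. 1)"
      using sum.inter_filter[OF finF, of "\<lambda>_. 1::real" "\<lambda>a. a \<in> F0"] by simp
    also have "{a\<in>F. a \<in> F0} = F0" unfolding F_def by auto
    finally show ?thesis using c0 by simp
  qed
  have su: "(\<Sum>a\<in>F. u a) = 0"
    unfolding u_def sum_subtractf sum_distrib_left[symmetric] sF1 sF0 c_def using s0 by simp
  obtain \<phi> where phi: "\<forall>a\<in>F. \<phi> (\<theta> a) - \<phi> a = u a"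
    using cyc_potential[OF th finF x0(1) x0(2)[OF refl] su] by blast
  define \<rho> where "\<rho> = q_rowmotion P le F0 F1 \<theta> ps"
  define J where "J = Jrs P le F0 F1"
  have sP: "set ps = P" using lx by (simp add: linear_extension_def)
  have th': "\<theta> permutes (F0 \<union> F1)" using th F_def by simp
  have rJ: "\<rho> L \<in> J" if "L \<in> J" for L
    using foldr_Jrs[of L P le F0 F1 ps \<theta>] that sP th' dj unfolding \<rho>_def J_def q_rowmotion_def by auto
  have rinj: "inj_on \<rho> J"
    using foldr_inj[of _ P le F0 F1 _ ps \<theta>] sP th' dj unfolding \<rho>_def J_def q_rowmotion_def inj_on_def by auto
  have finJ: "finite J"
  proof -
    have "J \<subseteq> P \<rightarrow>\<^sub>E (F0 \<union> F1)" unfolding J_def Jrs_def by auto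
    then show ?thesis using finite_PiE[OF finP, of "\<lambda>_. F0 \<union> F1"] finF F_def finite_subset by auto
  qed
  have phi': "\<forall>a\<in>F0 \<union> F1. \<phi> (\<theta> a) - \<phi> a = (if a \<in> F1 then 1 else 0) - c * (if \<theta> a \<in> F0 then 1 else 0)"
    using phi unfolding u_def F_def by simp
  have step: "Tplus P le p (lower_part P F0 L) - c * Tminus P le p (lower_part P F0 (\<rho> L))
     = \<phi> (\<rho> L p) - \<phi> (L p)" if "L \<in> J" for L
    using step_identity[of L P le F0 F1 \<theta> ps p \<phi> c] that th' dj lx p phi' unfolding \<rho>_def J_def by blast
  show ?thesis unfolding mesic_def
  proof
    fix L assume L: "L \<in> Jrs P le F0 F1"
    define Orb where "Orb = orbit_of \<rho> L"
    have pw: "(\<rho> ^^ n) L \<in> J" for n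
      by (induction n) (use L rJ J_def in auto)
    have OJ: "Orb \<subseteq> J" unfolding Orb_def orbit_of_def using pw by auto
    have finO: "finite Orb" using finite_subset[OF OJ finJ] .
    have injO: "inj_on \<rho> Orb" using inj_on_subset[OF rinj OJ] .
    have sub: "\<rho> ` Orb \<subseteq> Orb" unfolding Orb_def orbit_of_def
    proof (clarsimp)
      fix n show "\<exists>m. \<rho> ((\<rho> ^^ n) L) = (\<rho> ^^ m) L" by (rule exI[of _ "Suc n"]) simp
    qed
    have imO: "\<rho> ` Orb = Orb" using endo_inj_surj[OF finO sub injO] .
    have "(\<Sum>y\<in>Orb. Tplus P le p (lower_part P F0 y) - c * Tminus P le p (lower_part P F0 y))
        = (\<Sum>y\<in>Orb. Tplus P le p (lower_part P F0 y)) - c * (\<Sum>y\<in>Orb. Tminus P le p (lower_part P F0 y))"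
      by (simp add: sum_subtractf sum_distrib_left)
    also have "(\<Sum>y\<in>Orb. Tminus P le p (lower_part P F0 y)) = (\<Sum>y\<in>Orb. Tminus P le p (lower_part P F0 (\<rho> y)))"
      using sum_perm_inv[OF injO imO, of "\<lambda>y. Tminus P le p (lower_part P F0 y)"] by simp
    also have "(\<Sum>y\<in>Orb. Tplus P le p (lower_part P F0 y)) - c * \<dots>
        = (\<Sum>y\<in>Orb. Tplus P le p (lower_part P F0 y) - c * Tminus P le p (lower_part P F0 (\<rho> y)))"
      by (simp add: sum_subtractf sum_distrib_left)
    also have "\<dots> = (\<Sum>y\<in>Orb. \<phi> (\<rho> y p) - \<phi> (y p))"
      using step OJ by (intro sum.cong) auto
    also have "\<dots> = 0"
      using sum_perm_inv[OF injO imO, of "\<lambda>y. \<phi> (y p)"] by (simp add: sum_subtractf)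
    finally have "(\<Sum>y\<in>Orb. Tplus P le p (lower_part P F0 y) - c * Tminus P le p (lower_part P F0 y)) = 0" .
    then show "(\<Sum>y\<in>orbit_of (q_rowmotion P le F0 F1 \<theta> ps) L.
            Tplus P le p (lower_part P F0 y) - real r / real s * Tminus P le p (lower_part P F0 y)) /
          real (card (orbit_of (q_rowmotion P le F0 F1 \<theta> ps) L)) = 0"
      unfolding Orb_def \<rho>_def c_def by simp
  qed
qed

end
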